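(* For all $N\in\mathbb{Z}_{\geqslant 1}$, $$\prod_{n=1}^N n!\leqslant N^{\frac12(N+1)^2}e^{-\frac34(N^2-1)}.$$ *)

theory Defs
  imports Complex_Main
begin

end

theory Submission
  imports Defs
begin

lemma ln_lower: fixes x :: real assumes "x \<ge> 0" shows "2*x/(2+x) \<le> ln (1+x)"
proof -
  let ?f = "\<lambda>t::real. ln (1+t) - 2*t/(2+t)"
  have "?f 0 \<le> ?f x"
  proof (rule DERIV_nonneg_imp_nondecreasing[OF assms])
    fix t :: real assume t: "0 \<le> t" "t \<le> x"
    have d: "DERIV ?f t :> (1/(1+t) - (2*(2+t) - 2*t)/(2+t)^2)"
      using t by (auto intro!: derivative_eq_intros simp: power2_eq_square)
    have "1/(1+t) - (2*(2+t) - 2*t)/(2+t)^2 = t^2/((1+t)*(2+t)^2)"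
      using t by (simp add: divide_simps power2_eq_square) (simp add: algebra_simps)
    also have "\<dots> \<ge> 0" using t by simp
    finally show "\<exists>y. DERIV ?f t :> y \<and> y \<ge> 0" using d by blast
  qed
  thus ?thesis by simp
qed

lemma fact_bound: fixes m :: nat assumes "m \<ge> 1"
  shows "real (fact m) \<le> exp (1 - real m + (real m + 1/2) * ln (real m))"
  using assms
proof (induction m rule: dec_induct)
  case base then show ?case by simp
next
  case (step m)
  have m: "real m \<ge> 1" using step by simp
  have l: "2*(1/real m)/(2+1/real m) \<le> ln (1 + 1/real m)" by (rule ln_lower) simp
  have "2*(1/real m)/(2+1/real m) = 2/(2*real m+1)" using m by (simp add: field_simps)
  moreover have "ln (1 + 1/real m) = ln (real m + 1) - ln (real m)"
    proof -
    have "1 + 1/real m = (real m + 1)/real m" using m by (simp add: field_simps)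
    thus ?thesis using m by (simp add: ln_div)
  qed
  ultimately have k1: "2/(2*real m+1) \<le> ln (real m + 1) - ln (real m)"
    using l by simp
  have "(real m+1/2) * (2/(2*real m+1)) \<le> (real m + 1/2) * (ln (real m + 1) - ln (real m))"
    using k1 by (intro mult_left_mono) auto
  moreover have "(real m+1/2) * (2/(2*real m+1)) = 1" using m by (simp add: field_simps)
  ultimately have k: "1 \<le> (real m + 1/2) * (ln (real m + 1) - ln (real m))" by linarith
  have "real (fact (Suc m)) = (real m + 1) * real (fact m)" by (simp add: algebra_simps)
  also have "\<dots> \<le> (real m + 1) * exp (1 - real m + (real m + 1/2) * ln (real m))"
    using step by (intro mult_left_mono) auto
  also have "\<dots> = exp (ln (real m + 1) + 1 - real m + (real m + 1/2) * ln (real m))"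
    using m by (simp add: exp_add exp_diff)
  also have "\<dots> \<le> exp (1 - real (Suc m) + (real (Suc m) + 1/2) * ln (real (Suc m)))"
    using k by (simp add: algebra_simps)
  finally show ?case .
qed

theorem lemma4:
  fixes N :: nat
  assumes "N \<ge> 1"
  shows "(\<Prod>n=1..N. real (fact n)) \<le>
         real N powr ((real N + 1)^2 / 2) * exp (- (3/4) * (real N ^ 2 - 1))"
proof -
  define L where "L = (\<lambda>N::nat. (real N + 1)^2 / 2 * ln (real N) - (3/4) * (real N ^ 2 - 1))"
  have "(\<Prod>n=1..N. real (fact n)) \<le> exp (L N)"
    using assms
  proof (induction N rule: dec_induct)
    case base then show ?case by (simp add: L_def)
  next
    case (step N)
    define m where "m = real N + 1"
    have N: "real N \<ge> 1" using step by simp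
    have l: "2*(1/real N)/(2+1/real N) \<le> ln (1 + 1/real N)" by (rule ln_lower) simp
    have "2*(1/real N)/(2+1/real N) = 2/(2*m-1)" using N by (simp add: field_simps m_def)
    moreover have "ln (1 + 1/real N) = ln m - ln (real N)"
      proof -
      have "1 + 1/real N = m/real N" using N by (simp add: field_simps m_def)
      thus ?thesis using N by (simp add: ln_div m_def)
    qed
    ultimately have k0: "2/(2*m-1) \<le> ln m - ln (real N)" using l by simp
    have "m + 1/2 \<le> m^2 * (2/(2*m-1))" using N by (simp add: field_simps m_def power2_eq_square)
    also have "\<dots> \<le> m^2 * (ln m - ln (real N))" using k0 by (intro mult_left_mono) auto
    finally have k: "m + 1/2 \<le> m^2 * (ln m - ln (real N))" .
    have "(\<Prod>n=1..Suc N. real (fact n)) = (\<Prod>n=1..N. real (fact n)) * real (fact (Suc N))"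
      by (simp add: prod.nat_ivl_Suc' del: fact_Suc)
    also have "\<dots> \<le> exp (L N) * exp (1 - real (Suc N) + (real (Suc N) + 1/2) * ln (real (Suc N)))"
      using step fact_bound[of "Suc N"] by (intro mult_mono) auto
    also have "\<dots> = exp (L N + (1 - m + (m + 1/2) * ln m))"
      by (simp add: exp_add m_def)
    also have "\<dots> \<le> exp (L (Suc N))"
    proof -
      have e: "L (Suc N) - (L N + (1 - m + (m + 1/2) * ln m)) = m^2/2 * (ln m - ln (real N)) - m/2 - 1/4"
        unfolding L_def m_def of_nat_Suc by (simp add: field_simps power2_eq_square)
      show ?thesis using e k by simp
    qed
    finally show ?case .
  qed
  also have "exp (L N) = real N powr ((real N + 1)^2 / 2) * exp (- (3/4) * (real N ^ 2 - 1))"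
  proof -
    have "L N = ln (real N) * ((real N + 1)^2 / 2) + (- (3/4) * (real N ^ 2 - 1))"
      unfolding L_def by (simp add: algebra_simps)
    hence "exp (L N) = exp (ln (real N) * ((real N + 1)^2 / 2)) * exp (- (3/4) * (real N ^ 2 - 1))"
      by (simp only: exp_add)
    thus ?thesis using assms by (simp add: powr_def)
  qed
  finally show ?thesis .
qed

end
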